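(* Assume the setting in the context and the condition $2c_3^2\tau^{1-\theta\alpha}\le c_0\beta^{\alpha}\epsilon$. Then there exist constants $\tilde c_1,\tilde c_2>0$, independent of $\beta,\theta,\tau$ and $\epsilon^{-1}$, such that for all $u,v\in\mathbb{R}$: \[ 2(u+v)f_\tau(u)+\tau\epsilon^{-1}|f_\tau(u)|^2\le-\frac{c_0}{2(1+\beta\tau^{\theta})^{2\alpha}}|u|^2+\tilde c_1(1+|v|^{2q})+\tilde c_2\beta^{\alpha}\tau^{\theta\alpha}, \] \[ |f_\tau(u)|\le|f(u)|,\qquad |f_\tau(u)-f(u)|\le\alpha\beta\tau^{\theta}|u|^{\frac{2q-2}{\alpha}}|f(u)|. \]
   Context: Let $q>1$ be an integer and $f(v)=-c_fv^{2q-1}+f_0(v)$, $v\in\mathbb{R}$, with $c_f>0$ and $f_0$ twice differentiable satisfying $|f_0(v)|\le c_{f,0}(1+|v|^{2q-2})$ and $|f_0'(v)|+|f_0''(v)|\le c_{f,1}(1+|v|^{2q-3})$. Fix constants $c_0,\dots,c_5>0$ such that $(u+v)f(u)\le-c_0|u|^{2q}+c_1|v|^{2q}+c_2$ and $|f(u)|\le c_3|u|^{2q-1}+c_4|u|+c_5$ for all $u,v\in\mathbb{R}$. Let $\epsilon\in(0,1]$, $\tau>0$, $\beta,\theta>0$, $\alpha\in(0,1/\theta)$, and $f_\tau(v):=f(v)/(1+\beta\tau^{\theta}|v|^{(2q-2)/\alpha})^{\alpha}$. *)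

theory Defs
  imports Complex_Main
begin

definition ftau :: "(real \<Rightarrow> real) \<Rightarrow> nat \<Rightarrow> real \<Rightarrow> real \<Rightarrow> real \<Rightarrow> real \<Rightarrow> real \<Rightarrow> real" where
  "ftau f q \<alpha> \<beta> \<theta> \<tau> v =
     f v / (1 + \<beta> * \<tau> powr \<theta> * \<bar>v\<bar> powr ((2 * real q - 2) / \<alpha>)) powr \<alpha>"

end

theory Submission imports Defs begin

lemma bern_powr:
  fixes x a :: real assumes "x \<ge> 0" "a > 0"
  shows "1 - a * x \<le> (1 + x) powr (- a)"
proof -
  have "(1 + x) powr (- a) = exp (- a * ln (1 + x))" using assms by (simp add: powr_def)
  also have "\<dots> \<ge> 1 + (- a * ln (1 + x))" by (rule exp_ge_add_one_self)
  finally have "1 - a * ln (1 + x) \<le> (1 + x) powr (- a)" by simp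
  moreover have "a * ln (1 + x) \<le> a * x"
    using assms ln_add_one_self_le_self[of x] by (intro mult_left_mono) auto
  ultimately show ?thesis by linarith
qed

lemma key:
  fixes a F w D P T G V c0 c1 c2 c3 c4 c5 :: real and n :: nat
  assumes a: "a \<ge> 0" and D: "D \<ge> 1" and P: "P > 0" and T: "T \<ge> 0"
    and PD: "P * a ^ n \<le> D" and cT: "c3^2 * T \<le> c0 * P / 2"
    and hc: "c0 > 0" "c1 > 0" "c2 > 0" "c3 > 0" "c4 > 0" "c5 > 0"
    and V: "V \<ge> 0"
    and w: "w \<le> - c0 * a ^ (n+2) + c1 * V + c2"
    and F: "\<bar>F\<bar> \<le> c3 * a ^ (n+1) + c4 * a + c5"
    and a2: "a^2 \<le> a^n + 1"
    and G: "G \<le> c0 * a ^ (n+2) / D + c0"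
  shows "2 * w / D + T * \<bar>F / D\<bar>^2 \<le> - G
     + (c0 + 2*c1 + 2*c2 + 3*c0*c4^2/c3^2) * (1 + V)
     + (3*c0*c4^2/c3^2 + 3*c0*c5^2/c3^2 + 1) * P"
proof -
  define K1 where "K1 = 3*c0*c4^2/c3^2"
  define K2 where "K2 = 3*c0*c5^2/c3^2"
  have K1: "K1 \<ge> 0" and K2: "K2 \<ge> 0" using hc by (auto simp: K1_def K2_def)
  have Dp: "D > 0" using D by linarith
  have h1: "2 * w / D \<le> -2*c0*a^(n+2)/D + 2*c1*V + 2*c2"
  proof -
    have "2 * w / D \<le> 2 * (- c0 * a ^ (n+2) + c1 * V + c2) / D"
      using w Dp by (simp add: divide_right_mono)
    also have "\<dots> = -2*c0*a^(n+2)/D + 2*(c1*V + c2)/D" by (simp add: add_divide_distrib diff_divide_distrib)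
    also have "2*(c1*V + c2)/D \<le> 2*(c1*V+c2)"
    proof -
      have "c1*V+c2 \<ge> 0" using hc V by simp
      then show ?thesis using D by (simp add: divide_le_eq mult_le_cancel_left1 )
    qed
    finally show ?thesis by simp
  qed
  define A where "A = c3 * a ^ (n+1)"
  define B where "B = c4 * a + c5"
  have A0: "A \<ge> 0" and B0: "B \<ge> 0" using hc a by (auto simp: A_def B_def)
  have h2: "F^2 \<le> 3/2 * A^2 + 3 * B^2"
  proof -
    have "F^2 = \<bar>F\<bar>^2" by simp
    also have "\<dots> \<le> (A+B)^2" using F A0 B0 abs_ge_zero[of F] unfolding A_def B_def
      by (intro power_mono) auto
    also have "\<dots> \<le> 3/2 * A^2 + 3 * B^2" using zero_le_square[of "A - 2*B"]
      by (simp add: power2_eq_square algebra_simps)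
    finally show ?thesis .
  qed
  have B2: "B^2 \<le> 2*c4^2*a^2 + 2*c5^2" unfolding B_def
    using zero_le_square[of "c4*a - c5"] by (simp add: power2_eq_square algebra_simps)
  have eq: "T * \<bar>F / D\<bar>^2 = T * F^2 / D^2" by (simp add: power_divide)
  have h3: "T * F^2 / D^2 \<le> 3/2 * (T * A^2 / D^2) + 3 * (T * B^2 / D^2)"
  proof -
    have "T * F^2 \<le> T * (3/2 * A^2 + 3 * B^2)" using h2 T by (rule mult_left_mono)
    then have "T * F^2 / D^2 \<le> T * (3/2 * A^2 + 3 * B^2) / D^2" using Dp by (simp add: divide_right_mono)
    then show ?thesis using Dp by (simp add: field_simps)
  qed
  have h4: "T * A^2 / D^2 \<le> c0/2 * a^(n+2) / D"
  proof -
    have "T * A^2 = (c3^2*T) * (a^(n+2) * a^n)" unfolding A_def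
      by (simp add: power_mult_distrib power_add[symmetric] power_mult[symmetric] algebra_simps)
         (simp add: mult_2_right power_add)
    also have "\<dots> \<le> (c0 * P / 2) * (a^(n+2) * a^n)" using cT a by (intro mult_right_mono) auto
    also have "\<dots> = c0/2 * a^(n+2) * (P * a^n)" by simp
    also have "\<dots> \<le> c0/2 * a^(n+2) * D" using PD hc a by (intro mult_left_mono) auto
    finally have "T * A^2 \<le> c0/2 * a^(n+2) * D" .
    then have "T * A^2 / D^2 \<le> c0/2 * a^(n+2) * D / D^2" using Dp by (intro divide_right_mono) auto
    also have "\<dots> = c0/2 * a^(n+2) / D" using Dp by (simp add: power2_eq_square)
    finally show ?thesis .
  qed
  have h6: "P * a^2 / D^2 \<le> 1 + P"
  proof -
    have "P * a^2 \<le> P * a^n + P" using mult_left_mono[OF a2, of P] P by (simp add: distrib_left)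
    also have "\<dots> \<le> D + P" using PD by simp
    finally have "P * a^2 / D^2 \<le> (D + P) / D^2" using Dp by (simp add: divide_right_mono)
    also have "\<dots> = 1 / D + P / D^2" using Dp by (simp add: power2_eq_square field_simps)
    also have "1 / D \<le> 1" using D by simp
    also have "P / D^2 \<le> P" using D P
      by (smt (verit, best) divide_le_eq_1 le_divide_eq_1 one_le_power power2_eq_square divide_le_eq mult_le_cancel_left1)
    finally show ?thesis by simp
  qed
  have h7: "P / D^2 \<le> P" using D P
      by (smt (verit, best) divide_le_eq_1 le_divide_eq_1 one_le_power power2_eq_square divide_le_eq mult_le_cancel_left1)
  have h5: "3 * (T * B^2 / D^2) \<le> K1 * (1 + P) + K2 * P"
  proof -
    have Tle: "T \<le> c0 * P / (2 * c3^2)" using cT hc by (simp add: field_simps)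
    have "T * B^2 \<le> (c0 * P / (2 * c3^2)) * (2*c4^2*a^2 + 2*c5^2)"
      using Tle B2 T by (intro mult_mono) auto
    also have "\<dots> = (c0*c4^2/c3^2) * (P * a^2) + (c0*c5^2/c3^2) * P" using hc
      by (simp add: field_simps)
    finally have "T * B^2 / D^2 \<le> ((c0*c4^2/c3^2) * (P * a^2) + (c0*c5^2/c3^2) * P) / D^2"
      using Dp by (simp add: divide_right_mono)
    also have "\<dots> = (c0*c4^2/c3^2) * (P * a^2 / D^2) + (c0*c5^2/c3^2) * (P / D^2)"
      using Dp hc by (simp add: field_simps)
    also have "\<dots> \<le> (c0*c4^2/c3^2) * (1 + P) + (c0*c5^2/c3^2) * P"
      using h6 h7 hc by (intro add_mono mult_left_mono) auto
    finally have hh: "T * B^2 / D^2 \<le> (c0*c4^2/c3^2) * (1 + P) + (c0*c5^2/c3^2) * P" .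
    have "3 * (T * B^2 / D^2) \<le> 3 * ((c0*c4^2/c3^2) * (1 + P) + (c0*c5^2/c3^2) * P)" using hh by (intro mult_left_mono) auto
    also have "\<dots> = K1 * (1 + P) + K2 * P" unfolding K1_def K2_def using hc by (simp add: field_simps)
    finally show ?thesis .
  qed
  have pos: "c0 * a^(n+2) / D \<ge> 0" using hc a Dp by simp
  have "2 * w / D + T * \<bar>F / D\<bar>^2 \<le> -2*c0*a^(n+2)/D + 2*c1*V + 2*c2
      + 3/2 * (c0/2 * a^(n+2) / D) + (K1 * (1 + P) + K2 * P)"
    using h1 h3 h4 h5 eq by linarith
  also have "\<dots> \<le> - G + c0 + 2*c1*V + 2*c2 + K1 + (K1 + K2) * P"
    using G pos by (simp add: field_simps)
  also have "\<dots> \<le> - G + (c0 + 2*c1 + 2*c2 + K1) * (1 + V) + (K1 + K2 + 1) * P"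
    using hc V K1 K2 P by (simp add: algebra_simps)
  finally show ?thesis unfolding K1_def K2_def .
qed

theorem proposition3p2:
  fixes q :: nat and cf cf0 cf1 c0 c1 c2 c3 c4 c5 \<alpha> :: real
    and f f0 :: "real \<Rightarrow> real"
  assumes hq: "q > 1"
    and hcf: "cf > 0" and hcf0: "cf0 > 0" and hcf1: "cf1 > 0"
    and hf: "\<And>v. f v = - cf * v ^ (2 * q - 1) + f0 v"
    and hf0diff: "\<exists>f0' f0''. \<forall>v. (f0 has_real_derivative f0' v) (at v)
                     \<and> (f0' has_real_derivative f0'' v) (at v)
                     \<and> \<bar>f0' v\<bar> + \<bar>f0'' v\<bar> \<le> cf1 * (1 + \<bar>v\<bar> ^ (2 * q - 3))"
    and hf0: "\<And>v. \<bar>f0 v\<bar> \<le> cf0 * (1 + \<bar>v\<bar> ^ (2 * q - 2))"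
    and hc: "c0 > 0" "c1 > 0" "c2 > 0" "c3 > 0" "c4 > 0" "c5 > 0"
    and hdiss: "\<And>u v. (u + v) * f u \<le> - c0 * \<bar>u\<bar> ^ (2 * q) + c1 * \<bar>v\<bar> ^ (2 * q) + c2"
    and hgrowth: "\<And>u. \<bar>f u\<bar> \<le> c3 * \<bar>u\<bar> ^ (2 * q - 1) + c4 * \<bar>u\<bar> + c5"
    and h\<alpha>: "\<alpha> > 0"
  shows "\<exists>ct1 ct2. ct1 > 0 \<and> ct2 > 0 \<and>
    (\<forall>\<beta> \<theta> \<tau> \<epsilon>. \<beta> > 0 \<and> \<theta> > 0 \<and> \<tau> > 0 \<and> 0 < \<epsilon> \<and> \<epsilon> \<le> 1 \<and> \<alpha> < 1 / \<theta>
       \<and> 2 * c3 ^ 2 * \<tau> powr (1 - \<theta> * \<alpha>) \<le> c0 * \<beta> powr \<alpha> * \<epsilon> \<longrightarrow>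
      (\<forall>u v.
         2 * (u + v) * ftau f q \<alpha> \<beta> \<theta> \<tau> u + \<tau> / \<epsilon> * \<bar>ftau f q \<alpha> \<beta> \<theta> \<tau> u\<bar> ^ 2
           \<le> - c0 / (2 * (1 + \<beta> * \<tau> powr \<theta>) powr (2 * \<alpha>)) * \<bar>u\<bar> ^ 2
              + ct1 * (1 + \<bar>v\<bar> ^ (2 * q)) + ct2 * \<beta> powr \<alpha> * \<tau> powr (\<theta> * \<alpha>)
       \<and> \<bar>ftau f q \<alpha> \<beta> \<theta> \<tau> u\<bar> \<le> \<bar>f u\<bar>
       \<and> \<bar>ftau f q \<alpha> \<beta> \<theta> \<tau> u - f u\<bar>
           \<le> \<alpha> * \<beta> * \<tau> powr \<theta> * \<bar>u\<bar> powr ((2 * real q - 2) / \<alpha>) * \<bar>f u\<bar>))"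
proof -
  define K1 where "K1 = 3*c0*c4^2/c3^2"
  define K2 where "K2 = 3*c0*c5^2/c3^2"
  define n where "n = 2 * q - 2"
  have n2: "n \<ge> 2" using hq unfolding n_def by simp
  have nq: "n + 2 = 2 * q" "n + 1 = 2 * q - 1" using hq unfolding n_def by auto
  have rn: "2 * real q - 2 = real n" using hq unfolding n_def by (simp add: of_nat_diff)
  show ?thesis
  proof (rule exI[of _ "c0 + 2*c1 + 2*c2 + K1"], rule exI[of _ "K1 + K2 + 1"], intro conjI allI impI)
    show "c0 + 2*c1 + 2*c2 + K1 > 0" using hc unfolding K1_def by (simp add: add_pos_nonneg)
    show "K1 + K2 + 1 > 0" using hc unfolding K1_def K2_def
      by (simp add: add_nonneg_nonneg add_pos_nonneg)
    fix \<beta> \<theta> \<tau> \<epsilon> u v :: real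
    assume H: "\<beta> > 0 \<and> \<theta> > 0 \<and> \<tau> > 0 \<and> 0 < \<epsilon> \<and> \<epsilon> \<le> 1 \<and> \<alpha> < 1 / \<theta>
       \<and> 2 * c3 ^ 2 * \<tau> powr (1 - \<theta> * \<alpha>) \<le> c0 * \<beta> powr \<alpha> * \<epsilon>"
    then have hb: "\<beta> > 0" and ht: "\<theta> > 0" and htau: "\<tau> > 0" and he: "\<epsilon> > 0"
      and hcond: "2 * c3 ^ 2 * \<tau> powr (1 - \<theta> * \<alpha>) \<le> c0 * \<beta> powr \<alpha> * \<epsilon>" by auto
    define r where "r = (2 * real q - 2) / \<alpha>"
    define a where "a = \<bar>u\<bar>"
    define x where "x = \<beta> * \<tau> powr \<theta> * a powr r"
    define D where "D = (1 + x) powr \<alpha>"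
    define P where "P = \<beta> powr \<alpha> * \<tau> powr (\<theta> * \<alpha>)"
    define E where "E = 1 + \<beta> * \<tau> powr \<theta>"
    have a0: "a \<ge> 0" unfolding a_def by simp
    have x0: "x \<ge> 0" unfolding x_def using hb htau by simp
    have D1: "D \<ge> 1" unfolding D_def using x0 h\<alpha> by (intro ge_one_powr_ge_zero) auto
    have Dp: "D > 0" using D1 by linarith
    have P0: "P > 0" unfolding P_def using hb htau by simp
    have E1: "E \<ge> 1" unfolding E_def using hb htau by simp
    have ft: "ftau f q \<alpha> \<beta> \<theta> \<tau> u = f u / D"
      unfolding ftau_def D_def x_def a_def r_def by simp
    have ra: "r * \<alpha> = real n" unfolding r_def using h\<alpha> rn by simp
    have apow: "(a powr r) powr \<alpha> = a ^ n"
      using powr_realpow'[OF a0, of n] n2 by (simp add: powr_powr ra)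
    have apow2: "a powr (r * \<alpha>) = a ^ n" using apow by (simp add: powr_powr)
    have xa: "x powr \<alpha> = P * a ^ n"
      unfolding x_def P_def using hb htau a0
      by (simp add: powr_mult apow powr_powr[of \<tau>])
    have PD: "P * a ^ n \<le> D"
      unfolding D_def using x0 h\<alpha> xa[symmetric] by (simp add: powr_mono2)
    have cT: "c3^2 * (\<tau> / \<epsilon>) \<le> c0 * P / 2"
    proof -
      have "\<tau> = \<tau> powr (1 - \<theta> * \<alpha>) * \<tau> powr (\<theta> * \<alpha>)"
        using htau by (simp add: powr_add[symmetric])
      then have "c3^2 * (\<tau> / \<epsilon>) = (2 * c3 ^ 2 * \<tau> powr (1 - \<theta> * \<alpha>)) * \<tau> powr (\<theta> * \<alpha>) / (2 * \<epsilon>)"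
        by (metis (no_types, lifting) divide_divide_eq_left mult.assoc mult.commute
            nonzero_mult_div_cancel_left times_divide_eq_right zero_neq_numeral)
      also have "\<dots> \<le> (c0 * \<beta> powr \<alpha> * \<epsilon>) * \<tau> powr (\<theta> * \<alpha>) / (2 * \<epsilon>)"
        using hcond he htau by (intro divide_right_mono mult_right_mono) auto
      also have "\<dots> = c0 * P / 2" unfolding P_def using he by (simp add: field_simps)
      finally show ?thesis .
    qed
    have a2: "a^2 \<le> a^n + 1"
    proof (cases "a \<le> 1")
      case True
      then have "a^2 \<le> 1" using a0 by (simp add: power_le_one)
      then show ?thesis using a0 by (smt (verit) zero_le_power)
    next
      case False
      then have "a^2 \<le> a^n" using n2 by (intro power_increasing) auto
      then show ?thesis by simp
    qed
    have G: "c0 / (2 * E powr (2 * \<alpha>)) * a^2 \<le> c0 * a ^ (n+2) / D + c0"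
    proof (cases "a \<le> 1")
      case True
      have Ep: "E powr (2 * \<alpha>) \<ge> 1" using E1 h\<alpha> by (intro ge_one_powr_ge_zero) auto
      have "c0 / (2 * E powr (2 * \<alpha>)) * a^2 \<le> c0 / (2 * E powr (2 * \<alpha>)) * 1"
        using True a0 hc Ep by (intro mult_left_mono) (auto simp: power_le_one)
      also have "\<dots> \<le> c0"
      proof -
        have "c0 * 1 \<le> c0 * (2 * E powr (2 * \<alpha>))" using hc Ep by (intro mult_left_mono) auto
        then show ?thesis using Ep hc by (simp add: divide_le_eq)
      qed
      also have "0 \<le> c0 * a ^ (n+2) / D" using hc a0 Dp by simp
      ultimately show ?thesis by linarith
    next
      case False
      then have a1: "a \<ge> 1" by simp
      have ar1: "a powr r \<ge> 1" using a1 unfolding r_def using hq h\<alpha>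
        by (intro ge_one_powr_ge_zero) auto
      have "1 + x \<le> a powr r * E" unfolding x_def E_def using ar1 hb htau
        by (simp add: algebra_simps)
      then have "D \<le> (a powr r * E) powr \<alpha>" unfolding D_def using x0 h\<alpha> by (intro powr_mono2) auto
      also have "\<dots> = a ^ n * E powr \<alpha>" using a1 E1 apow powr_mult[of "a powr r" E \<alpha>] by (simp only:)
      finally have DE: "D \<le> a ^ n * E powr \<alpha>" .
      have Eap: "E powr \<alpha> \<ge> 1" using E1 h\<alpha> by (intro ge_one_powr_ge_zero) auto
      have E2: "E powr (2 * \<alpha>) = (E powr \<alpha>) * (E powr \<alpha>)"
        by (simp add: powr_add[symmetric])
      have anp: "a ^ n > 0" using a1 by simp
      have "c0 / (2 * E powr (2 * \<alpha>)) * a^2 \<le> c0 / (E powr \<alpha>) * a^2"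
      proof -
        have "c0 / (2 * E powr (2 * \<alpha>)) \<le> c0 / (E powr \<alpha>)"
        proof -
          have X: "E powr \<alpha> * 1 \<le> E powr \<alpha> * E powr \<alpha>" using Eap by (intro mult_left_mono) auto
          have "E powr \<alpha> \<le> 2 * (E powr \<alpha> * E powr \<alpha>)" using X Eap by simp
          moreover have "0 < E powr \<alpha> * (2 * (E powr \<alpha> * E powr \<alpha>))"
            using Eap by (intro mult_pos_pos) auto
          ultimately show ?thesis unfolding E2 using hc by (intro divide_left_mono) auto
        qed
        then show ?thesis by (intro mult_right_mono) auto
      qed
      also have "\<dots> = c0 * a ^ (n+2) / (a ^ n * E powr \<alpha>)"
        using anp Eap by (simp add: power_add power2_eq_square field_simps)
      also have "\<dots> \<le> c0 * a ^ (n+2) / D"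
        using DE Dp hc a0 by (intro divide_left_mono) auto
      finally show ?thesis using hc by linarith
    qed
    have V0: "\<bar>v\<bar> ^ (2*q) \<ge> 0" by simp
    have K: "2 * ((u + v) * f u) / D + (\<tau> / \<epsilon>) * \<bar>f u / D\<bar>^2 \<le> - (c0 / (2 * E powr (2 * \<alpha>)) * a^2)
     + (c0 + 2*c1 + 2*c2 + 3*c0*c4^2/c3^2) * (1 + \<bar>v\<bar> ^ (2*q))
     + (3*c0*c4^2/c3^2 + 3*c0*c5^2/c3^2 + 1) * P"
      apply (rule key[OF a0 D1 P0 _ PD cT hc V0 _ _ a2 G])
      using htau he apply simp
      using hdiss[of u v] nq a_def apply simp
      using hgrowth[of u] nq a_def apply simp
      done
    show "2 * (u + v) * ftau f q \<alpha> \<beta> \<theta> \<tau> u + \<tau> / \<epsilon> * \<bar>ftau f q \<alpha> \<beta> \<theta> \<tau> u\<bar> ^ 2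
           \<le> - c0 / (2 * (1 + \<beta> * \<tau> powr \<theta>) powr (2 * \<alpha>)) * \<bar>u\<bar> ^ 2
              + (c0 + 2*c1 + 2*c2 + K1) * (1 + \<bar>v\<bar> ^ (2 * q)) + (K1 + K2 + 1) * \<beta> powr \<alpha> * \<tau> powr (\<theta> * \<alpha>)"
      using K unfolding ft K1_def K2_def P_def E_def a_def by (simp add: mult.assoc ring_distribs)
    have "\<bar>f u / D\<bar> \<le> \<bar>f u\<bar>" using D1 Dp by (simp add: abs_div divide_le_eq mult_le_cancel_left1)
    then show "\<bar>ftau f q \<alpha> \<beta> \<theta> \<tau> u\<bar> \<le> \<bar>f u\<bar>" using ft by simp
    have "\<bar>f u / D - f u\<bar> = \<bar>f u\<bar> * (1 - (1 + x) powr (- \<alpha>))"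
    proof -
      have i: "(1 + x) powr (- \<alpha>) = 1 / D" unfolding D_def by (simp add: powr_minus_divide)
      have "1 / D \<le> 1" using D1 by simp
      then have "\<bar>f u / D - f u\<bar> = \<bar>f u\<bar> * \<bar>1 / D - 1\<bar>" by (metis abs_mult diff_divide_distrib times_divide_eq_right mult.right_neutral left_diff_distrib mult.commute)
      also have "\<bar>1 / D - 1\<bar> = 1 - 1/D" using \<open>1 / D \<le> 1\<close> by simp
      finally show ?thesis using i by simp
    qed
    also have "\<dots> \<le> \<bar>f u\<bar> * (\<alpha> * x)"
      using bern_powr[OF x0 h\<alpha>] by (intro mult_left_mono) auto
    finally show "\<bar>ftau f q \<alpha> \<beta> \<theta> \<tau> u - f u\<bar>
           \<le> \<alpha> * \<beta> * \<tau> powr \<theta> * \<bar>u\<bar> powr ((2 * real q - 2) / \<alpha>) * \<bar>f u\<bar>"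
      using ft unfolding x_def a_def r_def by (simp add: mult_ac)
  qed
qed

end
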